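(* Assume separability (as defined in the context). Consider a stable outcome, with equilibrium utilities $(\tilde u_i)$ of men and $(\tilde v_j)$ of women and group-level matching patterns $(\mu_{xy})$. Then there exist numbers $U_{xy}$ and $V_{xy}$ for $(x,y)\in\mathcal A$, with $U_{x0}=0$ and $V_{0y}=0$, such that: (i) a man $i$ of group $x$ is married to a woman of group $y^*\in\mathcal Y$ if and only if $y^*$ maximizes $U_{xy}+\varepsilon_{iy}$ over $y\in\mathcal Y_0$; if the maximum is achieved at $y=0$ he is single; and $\tilde u_i=\max_{y\in\mathcal Y_0}(U_{xy}+\varepsilon_{iy})$; (ii) a woman $j$ of group $y$ is married to a man of group $x^*\in\mathcal X$ if and only if $x^*$ maximizes $V_{xy}+\eta_{xj}$ over $x\in\mathcal X_0$; if the maximum is achieved at $x=0$ she is single; and $\tilde v_j=\max_{x\in\mathcal X_0}(V_{xy}+\eta_{xj})$; (iii) $U_{xy}+V_{xy}\ge\Phi_{xy}$ for all $x\in\mathcal X,y\in\mathcal Y$, with equality whenever $\mu_{xy}>0$.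
   Context: Setting. $\mathcal X$ and $\mathcal Y$ are finite nonempty sets (groups of men and of women); $\mathcal X_0=\mathcal X\cup\{0\}$, $\mathcal Y_0=\mathcal Y\cup\{0\}$, where $0$ stands for singlehood, and $\mathcal A=(\mathcal X\times\mathcal Y)\cup(\mathcal X\times\{0\})\cup(\{0\}\times\mathcal Y)$. There is a continuum of men and of women: $n_x>0$ is the mass of men of group $x$, $m_y>0$ the mass of women of group $y$, and $\bm r=(\bm n,\bm m)$. Each man $i$ has a group $x_i\in\mathcal X$ and a vector $\varepsilon_i=(\varepsilon_{iy})_{y\in\mathcal Y_0}\in\mathbb R^{\mathcal Y_0}$ whose distribution among men of group $x$ is $P_x$; each woman $j$ has a group $y_j\in\mathcal Y$ and a vector $\eta_j=(\eta_{xj})_{x\in\mathcal X_0}\in\mathbb R^{\mathcal X_0}$ whose distribution among women of group $y$ is $Q_y$. Utility is perfectly transferable. Separability: there is a matrix $\Phi=(\Phi_{xy})_{x\in\mathcal X,y\in\mathcal Y}$ such that the joint surplus of a match between man $i$ and woman $j$ is $\tilde\Phi_{ij}=\Phi_{x_iy_j}+\varepsilon_{iy_j}+\eta_{x_ij}$, the utility of a single man $i$ is $\varepsilon_{i0}$ and that of a single woman $j$ is $\eta_{0j}$; moreover $\max_{y\in\mathcal Y_0}|\varepsilon_y|$ has finite expectation under each $P_x$ and $\max_{x\in\mathcal X_0}|\eta_x|$ has finite expectation under each $Q_y$. A stable outcome is an assignment in which each individual has at most one partner, together with utilities $\tilde u_i,\tilde v_j$ such that $\tilde u_i\ge\varepsilon_{i0}$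 with equality if $i$ is single, $\tilde v_j\ge\eta_{0j}$ with equality if $j$ is single, and $\tilde u_i+\tilde v_j\ge\tilde\Phi_{ij}$ for all $i,j$, with equality if $i$ and $j$ are matched together. At the group level a matching is described by $\mu=(\mu_{xy})_{x\in\mathcal X,y\in\mathcal Y}$, where $\mu_{xy}$ is the mass of couples formed by a man of group $x$ and a woman of group $y$; $\mu_{x0}=n_x-\sum_{y}\mu_{xy}$ and $\mu_{0y}=m_y-\sum_x\mu_{xy}$ are the masses of singles. The set of feasible matchings is $\mathcal M(\bm r)=\{\mu\ge0:\sum_{y}\mu_{xy}\le n_x\ \forall x,\ \sum_x\mu_{xy}\le m_y\ \forall y\}$. *)

theory Defs
  imports "HOL-Analysis.Analysis"
begin

(* Groups of men: type 'x; groups of women: type 'y.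
   Singlehood 0 is encoded by None: X_0 = opt0 X, Y_0 = opt0 Y.
   Men are the points of measure space M, women the points of W.
   eps i (Some y) = eps_iy, eps i None = eps_i0; eta j (Some x) = eta_xj,
   eta j None = eta_0j.  match i j: man i and woman j are married. *)

definition opt0 :: "'a set \<Rightarrow> 'a option set" where
  "opt0 S = insert None (Some ` S)"

definition surplus ::
  "('m \<Rightarrow> 'x) \<Rightarrow> ('w \<Rightarrow> 'y) \<Rightarrow> ('x \<Rightarrow> 'y \<Rightarrow> real) \<Rightarrow>
   ('m \<Rightarrow> 'y option \<Rightarrow> real) \<Rightarrow> ('w \<Rightarrow> 'x option \<Rightarrow> real) \<Rightarrow> 'm \<Rightarrow> 'w \<Rightarrow> real" where
  "surplus xg yg Phi eps eta i j =
     Phi (xg i) (yg j) + eps i (Some (yg j)) + eta j (Some (xg i))"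

definition assignment :: "'m set \<Rightarrow> 'w set \<Rightarrow> ('m \<Rightarrow> 'w \<Rightarrow> bool) \<Rightarrow> bool" where
  "assignment SM SW match \<longleftrightarrow>
     (\<forall>i j. match i j \<longrightarrow> i \<in> SM \<and> j \<in> SW) \<and>
     (\<forall>i j j'. match i j \<and> match i j' \<longrightarrow> j = j') \<and>
     (\<forall>i i' j. match i j \<and> match i' j \<longrightarrow> i = i')"

definition stable_outcome ::
  "'m set \<Rightarrow> 'w set \<Rightarrow> ('m \<Rightarrow> 'x) \<Rightarrow> ('w \<Rightarrow> 'y) \<Rightarrow> ('x \<Rightarrow> 'y \<Rightarrow> real) \<Rightarrow>
   ('m \<Rightarrow> 'y option \<Rightarrow> real) \<Rightarrow> ('w \<Rightarrow> 'x option \<Rightarrow> real) \<Rightarrow>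
   ('m \<Rightarrow> 'w \<Rightarrow> bool) \<Rightarrow> ('m \<Rightarrow> real) \<Rightarrow> ('w \<Rightarrow> real) \<Rightarrow> bool" where
  "stable_outcome SM SW xg yg Phi eps eta match u v \<longleftrightarrow>
     assignment SM SW match \<and>
     (\<forall>i\<in>SM. u i \<ge> eps i None \<and> ((\<not> (\<exists>j. match i j)) \<longrightarrow> u i = eps i None)) \<and>
     (\<forall>j\<in>SW. v j \<ge> eta j None \<and> ((\<not> (\<exists>i. match i j)) \<longrightarrow> v j = eta j None)) \<and>
     (\<forall>i\<in>SM. \<forall>j\<in>SW. u i + v j \<ge> surplus xg yg Phi eps eta i j \<and>
        (match i j \<longrightarrow> u i + v j = surplus xg yg Phi eps eta i j))"

definition mu_pattern ::
  "'m measure \<Rightarrow> 'w set \<Rightarrow> ('m \<Rightarrow> 'x) \<Rightarrow> ('w \<Rightarrow> 'y) \<Rightarrow> ('m \<Rightarrow> 'w \<Rightarrow> bool) \<Rightarrow> 'x \<Rightarrow> 'y \<Rightarrow> real" where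
  "mu_pattern M SW xg yg match x y =
     measure M {i \<in> space M. xg i = x \<and> (\<exists>j\<in>SW. match i j \<and> yg j = y)}"

end

theory Submission
  imports Defs
begin

theorem proposition1:
  fixes X :: "'x set" and Y :: "'y set"
    and M :: "'m measure" and W :: "'w measure"
    and xg :: "'m \<Rightarrow> 'x" and yg :: "'w \<Rightarrow> 'y"
    and Phi :: "'x \<Rightarrow> 'y \<Rightarrow> real"
    and eps :: "'m \<Rightarrow> 'y option \<Rightarrow> real" and eta :: "'w \<Rightarrow> 'x option \<Rightarrow> real"
    and match :: "'m \<Rightarrow> 'w \<Rightarrow> bool"
    and u :: "'m \<Rightarrow> real" and v :: "'w \<Rightarrow> real"
  assumes X_fin: "finite X" and X_ne: "X \<noteq> {}"
    and Y_fin: "finite Y" and Y_ne: "Y \<noteq> {}"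
    and M_fin: "finite_measure M" and W_fin: "finite_measure W"
    and xg_in: "\<forall>i\<in>space M. xg i \<in> X"
    and yg_in: "\<forall>j\<in>space W. yg j \<in> Y"
    and n_pos: "\<forall>x\<in>X. measure M {i \<in> space M. xg i = x} > 0"
    and m_pos: "\<forall>y\<in>Y. measure W {j \<in> space W. yg j = y} > 0"
    and eps_int: "\<forall>x\<in>X. set_integrable M {i \<in> space M. xg i = x}
                     (\<lambda>i. Max ((\<lambda>y. \<bar>eps i y\<bar>) ` opt0 Y))"
    and eta_int: "\<forall>y\<in>Y. set_integrable W {j \<in> space W. yg j = y}
                     (\<lambda>j. Max ((\<lambda>x. \<bar>eta j x\<bar>) ` opt0 X))"
    and stable: "stable_outcome (space M) (space W) xg yg Phi eps eta match u v"
  shows "\<exists>U V :: 'x option \<Rightarrow> 'y option \<Rightarrow> real.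
     (\<forall>x\<in>X. U (Some x) None = 0) \<and> (\<forall>y\<in>Y. V None (Some y) = 0) \<and>
     (\<forall>i\<in>space M.
        (\<forall>j. match i j \<longrightarrow>
           (\<forall>y'\<in>opt0 Y. U (Some (xg i)) y' + eps i y'
                 \<le> U (Some (xg i)) (Some (yg j)) + eps i (Some (yg j)))) \<and>
        ((\<not> (\<exists>j. match i j)) \<longrightarrow>
           (\<forall>y'\<in>opt0 Y. U (Some (xg i)) y' + eps i y' \<le> U (Some (xg i)) None + eps i None)) \<and>
        u i = Max ((\<lambda>y'. U (Some (xg i)) y' + eps i y') ` opt0 Y)) \<and>
     (\<forall>j\<in>space W.
        (\<forall>i. match i j \<longrightarrow>
           (\<forall>x'\<in>opt0 X. V x' (Some (yg j)) + eta j x'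
                 \<le> V (Some (xg i)) (Some (yg j)) + eta j (Some (xg i)))) \<and>
        ((\<not> (\<exists>i. match i j)) \<longrightarrow>
           (\<forall>x'\<in>opt0 X. V x' (Some (yg j)) + eta j x' \<le> V None (Some (yg j)) + eta j None)) \<and>
        v j = Max ((\<lambda>x'. V x' (Some (yg j)) + eta j x') ` opt0 X)) \<and>
     (\<forall>x\<in>X. \<forall>y\<in>Y. U (Some x) (Some y) + V (Some x) (Some y) \<ge> Phi x y \<and>
        (mu_pattern M (space W) xg yg match x y > 0 \<longrightarrow>
           U (Some x) (Some y) + V (Some x) (Some y) = Phi x y))"
proof -
  define GM where "GM x = {i \<in> space M. xg i = x}" for x
  define GW where "GW y = {j \<in> space W. yg j = y}" for y
  define U0 where "U0 x y = Inf ((\<lambda>i. u i - eps i (Some y)) ` GM x)" for x y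
  define V0 where "V0 x y = Inf ((\<lambda>j. v j - eta j (Some x)) ` GW y)" for x y
  define U where "U xo yo = (case xo of None \<Rightarrow> 0 | Some x \<Rightarrow> (case yo of None \<Rightarrow> 0 | Some y \<Rightarrow> U0 x y))" for xo yo
  define V where "V xo yo = (case yo of None \<Rightarrow> 0 | Some y \<Rightarrow> (case xo of None \<Rightarrow> 0 | Some x \<Rightarrow> V0 x y))" for xo yo
  have st: "assignment (space M) (space W) match"
    "\<And>i. i\<in>space M \<Longrightarrow> u i \<ge> eps i None \<and> ((\<not> (\<exists>j. match i j)) \<longrightarrow> u i = eps i None)"
    "\<And>j. j\<in>space W \<Longrightarrow> v j \<ge> eta j None \<and> ((\<not> (\<exists>i. match i j)) \<longrightarrow> v j = eta j None)"
    "\<And>i j. i\<in>space M \<Longrightarrow> j\<in>space W \<Longrightarrow> u i + v j \<ge> surplus xg yg Phi eps eta i j \<and>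
        (match i j \<longrightarrow> u i + v j = surplus xg yg Phi eps eta i j)"
    using stable unfolding stable_outcome_def by blast+
  have mij: "\<And>i j. match i j \<Longrightarrow> i \<in> space M \<and> j \<in> space W"
    using st(1) unfolding assignment_def by blast
  have GMne: "GM x \<noteq> {}" if "x \<in> X" for x
    using n_pos that unfolding GM_def by (metis measure_empty less_irrefl)
  have GWne: "GW y \<noteq> {}" if "y \<in> Y" for y
    using m_pos that unfolding GW_def by (metis measure_empty less_irrefl)
  have ineq: "u i - eps i (Some y) + (v j - eta j (Some x)) \<ge> Phi x y"
    if "i \<in> GM x" "j \<in> GW y" for i j x y
    using st(4)[of i j] that unfolding GM_def GW_def surplus_def by auto
  have bddU: "bdd_below ((\<lambda>i. u i - eps i (Some y)) ` GM x)" if yY: "y \<in> Y" for x y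
  proof -
    obtain j0 where j0: "j0 \<in> GW y" using GWne[OF yY] by blast
    show ?thesis unfolding bdd_below_def
      by (rule exI[of _ "Phi x y - (v j0 - eta j0 (Some x))"]) (use ineq j0 in force)
  qed
  have bddV: "bdd_below ((\<lambda>j. v j - eta j (Some x)) ` GW y)" if xX: "x \<in> X" for x y
  proof -
    obtain i0 where i0: "i0 \<in> GM x" using GMne[OF xX] by blast
    show ?thesis unfolding bdd_below_def
      by (rule exI[of _ "Phi x y - (u i0 - eps i0 (Some y))"]) (use ineq i0 in force)
  qed
  have Ule: "U0 x y \<le> u i - eps i (Some y)" if "y \<in> Y" "i \<in> GM x" for x y i
    unfolding U0_def by (rule cInf_lower) (use that bddU in auto)
  have Vle: "V0 x y \<le> v j - eta j (Some x)" if "x \<in> X" "j \<in> GW y" for x y j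
    unfolding V0_def by (rule cInf_lower) (use that bddV in auto)
  have sum: "U0 x y + V0 x y \<ge> Phi x y" if "x \<in> X" "y \<in> Y" for x y
  proof -
    have "\<forall>i\<in>GM x. V0 x y \<ge> Phi x y - (u i - eps i (Some y))"
    proof
      fix i assume i: "i \<in> GM x"
      show "V0 x y \<ge> Phi x y - (u i - eps i (Some y))"
        unfolding V0_def by (rule cInf_greatest) (use GWne[OF that(2)] ineq[OF i] in force)+
    qed
    hence "U0 x y \<ge> Phi x y - V0 x y"
      unfolding U0_def by (intro cInf_greatest) (use GMne[OF that(1)] in force)+
    thus ?thesis by simp
  qed
  have matched: "U0 (xg i) (yg j) = u i - eps i (Some (yg j)) \<and>
      V0 (xg i) (yg j) = v j - eta j (Some (xg i)) \<and>
      U0 (xg i) (yg j) + V0 (xg i) (yg j) = Phi (xg i) (yg j)" if m: "match i j" for i j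
  proof -
    have ij: "i \<in> space M" "j \<in> space W" using mij[OF m] by auto
    have x: "xg i \<in> X" and y: "yg j \<in> Y" using ij xg_in yg_in by auto
    have gi: "i \<in> GM (xg i)" and gj: "j \<in> GW (yg j)" using ij unfolding GM_def GW_def by auto
    have eq: "u i + v j = surplus xg yg Phi eps eta i j" using st(4)[OF ij] m by blast
    show ?thesis using Ule[OF y gi] Vle[OF x gj] sum[OF x y] eq unfolding surplus_def by linarith
  qed
  have fin: "finite (opt0 Y)" "finite (opt0 X)" using X_fin Y_fin unfolding opt0_def by auto
  have menle: "U (Some (xg i)) y' + eps i y' \<le> u i" if "i \<in> space M" "y' \<in> opt0 Y" for i y'
  proof (cases y')
    case None then show ?thesis using st(2)[OF that(1)] unfolding U_def by simp
  next
    case (Some y) then have "y \<in> Y" using that(2) unfolding opt0_def by auto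
    then show ?thesis using Ule[of y i "xg i"] that(1) Some unfolding U_def GM_def by auto
  qed
  have womle: "V x' (Some (yg j)) + eta j x' \<le> v j" if "j \<in> space W" "x' \<in> opt0 X" for j x'
  proof (cases x')
    case None then show ?thesis using st(3)[OF that(1)] unfolding V_def by simp
  next
    case (Some x) then have "x \<in> X" using that(2) unfolding opt0_def by auto
    then show ?thesis using Vle[of x j "yg j"] that(1) Some unfolding V_def GW_def by auto
  qed
  have menatt: "\<exists>y'\<in>opt0 Y. U (Some (xg i)) y' + eps i y' = u i \<and>
        (\<forall>j. match i j \<longrightarrow> y' = Some (yg j)) \<and> ((\<not>(\<exists>j. match i j)) \<longrightarrow> y' = None)"
    if "i \<in> space M" for i
  proof (cases "\<exists>j. match i j")
    case True then obtain j where m: "match i j" by blast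
    have "\<forall>j'. match i j' \<longrightarrow> j' = j" using st(1) m unfolding assignment_def by blast
    moreover have "yg j \<in> Y" using mij[OF m] yg_in by auto
    ultimately show ?thesis using matched[OF m] True
      by (intro bexI[of _ "Some (yg j)"]) (auto simp: U_def opt0_def)
  next
    case False then show ?thesis using st(2)[OF that]
      by (intro bexI[of _ None]) (auto simp: U_def opt0_def)
  qed
  have womatt: "\<exists>x'\<in>opt0 X. V x' (Some (yg j)) + eta j x' = v j \<and>
        (\<forall>i. match i j \<longrightarrow> x' = Some (xg i)) \<and> ((\<not>(\<exists>i. match i j)) \<longrightarrow> x' = None)"
    if "j \<in> space W" for j
  proof (cases "\<exists>i. match i j")
    case True then obtain i where m: "match i j" by blast
    have "\<forall>i'. match i' j \<longrightarrow> i' = i" using st(1) m unfolding assignment_def by blast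
    moreover have "xg i \<in> X" using mij[OF m] xg_in by auto
    ultimately show ?thesis using matched[OF m] True
      by (intro bexI[of _ "Some (xg i)"]) (auto simp: V_def opt0_def)
  next
    case False then show ?thesis using st(3)[OF that]
      by (intro bexI[of _ None]) (auto simp: V_def opt0_def)
  qed
  have maxU: "u i = Max ((\<lambda>y'. U (Some (xg i)) y' + eps i y') ` opt0 Y)" if iM: "i \<in> space M" for i
  proof -
    obtain y0 where y0: "y0 \<in> opt0 Y" "U (Some (xg i)) y0 + eps i y0 = u i" using menatt[OF iM] by blast
    show ?thesis
      by (rule sym, rule Max_eqI) (use fin menle[OF iM] y0 in \<open>auto intro!: image_eqI[of _ _ y0]\<close>)
  qed
  have maxV: "v j = Max ((\<lambda>x'. V x' (Some (yg j)) + eta j x') ` opt0 X)" if jW: "j \<in> space W" for j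
  proof -
    obtain x0 where x0: "x0 \<in> opt0 X" "V x0 (Some (yg j)) + eta j x0 = v j" using womatt[OF jW] by blast
    show ?thesis
      by (rule sym, rule Max_eqI) (use fin womle[OF jW] x0 in \<open>auto intro!: image_eqI[of _ _ x0]\<close>)
  qed
  have c1: "\<forall>x\<in>X. U (Some x) None = 0" unfolding U_def by simp
  have c2: "\<forall>y\<in>Y. V None (Some y) = 0" unfolding V_def by simp
  have c3: "\<forall>i\<in>space M.
        (\<forall>j. match i j \<longrightarrow>
           (\<forall>y'\<in>opt0 Y. U (Some (xg i)) y' + eps i y'
                 \<le> U (Some (xg i)) (Some (yg j)) + eps i (Some (yg j)))) \<and>
        ((\<not> (\<exists>j. match i j)) \<longrightarrow>
           (\<forall>y'\<in>opt0 Y. U (Some (xg i)) y' + eps i y' \<le> U (Some (xg i)) None + eps i None)) \<and>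
        u i = Max ((\<lambda>y'. U (Some (xg i)) y' + eps i y') ` opt0 Y)"
  proof (intro ballI conjI allI impI)
    fix i j y' assume i: "i \<in> space M" and m: "match i j" and y': "y' \<in> opt0 Y"
    show "U (Some (xg i)) y' + eps i y' \<le> U (Some (xg i)) (Some (yg j)) + eps i (Some (yg j))"
      using menle[OF i y'] matched[OF m] by (simp add: U_def)
  next
    fix i y' assume i: "i \<in> space M" and n: "\<not> (\<exists>j. match i j)" and y': "y' \<in> opt0 Y"
    show "U (Some (xg i)) y' + eps i y' \<le> U (Some (xg i)) None + eps i None"
      using menle[OF i y'] st(2)[OF i] n by (simp add: U_def)
  next
    fix i assume "i \<in> space M" then show "u i = Max ((\<lambda>y'. U (Some (xg i)) y' + eps i y') ` opt0 Y)" by (rule maxU)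
  qed
  have c4: "\<forall>j\<in>space W.
        (\<forall>i. match i j \<longrightarrow>
           (\<forall>x'\<in>opt0 X. V x' (Some (yg j)) + eta j x'
                 \<le> V (Some (xg i)) (Some (yg j)) + eta j (Some (xg i)))) \<and>
        ((\<not> (\<exists>i. match i j)) \<longrightarrow>
           (\<forall>x'\<in>opt0 X. V x' (Some (yg j)) + eta j x' \<le> V None (Some (yg j)) + eta j None)) \<and>
        v j = Max ((\<lambda>x'. V x' (Some (yg j)) + eta j x') ` opt0 X)"
  proof (intro ballI conjI allI impI)
    fix j i x' assume j: "j \<in> space W" and m: "match i j" and x': "x' \<in> opt0 X"
    show "V x' (Some (yg j)) + eta j x' \<le> V (Some (xg i)) (Some (yg j)) + eta j (Some (xg i))"
      using womle[OF j x'] matched[OF m] by (simp add: V_def)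
  next
    fix j x' assume j: "j \<in> space W" and n: "\<not> (\<exists>i. match i j)" and x': "x' \<in> opt0 X"
    show "V x' (Some (yg j)) + eta j x' \<le> V None (Some (yg j)) + eta j None"
      using womle[OF j x'] st(3)[OF j] n by (simp add: V_def)
  next
    fix j assume "j \<in> space W" then show "v j = Max ((\<lambda>x'. V x' (Some (yg j)) + eta j x') ` opt0 X)" by (rule maxV)
  qed
  have c5: "\<forall>x\<in>X. \<forall>y\<in>Y. U (Some x) (Some y) + V (Some x) (Some y) \<ge> Phi x y \<and>
        (mu_pattern M (space W) xg yg match x y > 0 \<longrightarrow>
           U (Some x) (Some y) + V (Some x) (Some y) = Phi x y)"
  proof (intro ballI conjI impI)
    fix x y assume x: "x \<in> X" and y: "y \<in> Y"
    show "Phi x y \<le> U (Some x) (Some y) + V (Some x) (Some y)"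
      using sum[OF x y] by (simp add: U_def V_def)
    assume mu: "mu_pattern M (space W) xg yg match x y > 0"
    have "{i \<in> space M. xg i = x \<and> (\<exists>j\<in>space W. match i j \<and> yg j = y)} \<noteq> {}"
      using mu unfolding mu_pattern_def by (metis measure_empty less_irrefl)
    then obtain i j where "match i j" "xg i = x" "yg j = y" by blast
    then show "U (Some x) (Some y) + V (Some x) (Some y) = Phi x y"
      using matched by (auto simp: U_def V_def)
  qed
  show ?thesis using c1 c2 c3 c4 c5 by blast
qed

end
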